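(* Let $\omega_r$ be a minuscule fundamental weight and $P=P_{S\setminus\{\alpha_r\}}$. Write $w_0^{S\setminus\{\alpha_r\}}(\omega_r)=\omega_r-\sum_{j=1}^n a_j\alpha_j$ with $a_j\in\mathbb{Z}_{\ge0}$. Fix $1\le s\le n$ and an integer $c$ with $0\le c\le a_s$. Then there is a unique minimal element $\tau_{s,c}\in W^{S\setminus\{\alpha_r\}}$ such that $\langle\omega_r-\tau_{s,c}(\omega_r),\lambda_s\rangle=c$.
   Context: $G$ simple adjoint of rank $n$ over $\mathbb{C}$, $T\subseteq B$, Weyl group $W$ with longest element $w_0$, positive roots $R^+$, simple roots $S=\{\alpha_1,\dots,\alpha_n\}$, fundamental weights $\omega_i$; $\lambda_s$ is the one-parameter subgroup with $\langle\alpha_j,\lambda_s\rangle=\delta_{sj}$. $\omega_r$ minuscule: $\langle\omega_r,\beta^\vee\rangle\le1$ for all $\beta\in R^+$. $W^{S\setminus\{\alpha_r\}}=\{w\in W:w(\alpha)>0\ \forall\alpha\in S\setminus\{\alpha_r\}\}$ is the set of minimal coset representatives of $W/W_{S\setminus\{\alpha_r\}}$, ordered by the Bruhat order, and $w_0^{S\setminus\{\alpha_r\}}$ is the minimal representative of the coset of $w_0$. Minimal means minimal with respect to the Bruhat order. *)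

theory Defs
  imports "HOL-Analysis.Analysis"
begin

text \<open>Root-system combinatorics attached to a simple (adjoint) group G of rank n.
  Everything is realised in a real Euclidean space 'a of dimension n (= X(T) tensor R).\<close>

definition coroot_pair :: "'a::euclidean_space \<Rightarrow> 'a \<Rightarrow> real" where
  "coroot_pair v \<beta> = 2 * (v \<bullet> \<beta>) / (\<beta> \<bullet> \<beta>)"

definition refl :: "'a::euclidean_space \<Rightarrow> 'a \<Rightarrow> 'a" where
  "refl \<beta> v = v - coroot_pair v \<beta> *\<^sub>R \<beta>"

definition root_system :: "'a::euclidean_space set \<Rightarrow> bool" where
  "root_system R \<longleftrightarrow> finite R \<and> 0 \<notin> R \<and> span R = UNIV \<and>
     (\<forall>\<alpha>\<in>R. \<forall>\<beta>\<in>R. refl \<alpha> \<beta> \<in> R \<and> coroot_pair \<beta> \<alpha> \<in> \<int>) \<and>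
     (\<forall>\<alpha>\<in>R. \<forall>c::real. c *\<^sub>R \<alpha> \<in> R \<longrightarrow> c = 1 \<or> c = -1)"

definition irreducible_rs :: "'a::euclidean_space set \<Rightarrow> bool" where
  "irreducible_rs R \<longleftrightarrow> \<not> (\<exists>R1 R2. R1 \<noteq> {} \<and> R2 \<noteq> {} \<and> R1 \<union> R2 = R \<and> R1 \<inter> R2 = {} \<and>
      (\<forall>x\<in>R1. \<forall>y\<in>R2. x \<bullet> y = 0))"

definition is_base :: "'a::euclidean_space set \<Rightarrow> (nat \<Rightarrow> 'a) \<Rightarrow> nat \<Rightarrow> bool" where
  "is_base R \<alpha> n \<longleftrightarrow> inj_on \<alpha> {1..n} \<and> \<alpha> ` {1..n} \<subseteq> R \<and> independent (\<alpha> ` {1..n}) \<and>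
     (\<forall>\<beta>\<in>R. \<exists>c::nat \<Rightarrow> int. \<beta> = (\<Sum>j=1..n. of_int (c j) *\<^sub>R \<alpha> j) \<and>
        ((\<forall>j\<in>{1..n}. c j \<ge> 0) \<or> (\<forall>j\<in>{1..n}. c j \<le> 0)))"

definition pos_roots :: "'a::euclidean_space set \<Rightarrow> (nat \<Rightarrow> 'a) \<Rightarrow> nat \<Rightarrow> 'a set" where
  "pos_roots R \<alpha> n = {\<beta>\<in>R. \<exists>c::nat \<Rightarrow> int. \<beta> = (\<Sum>j=1..n. of_int (c j) *\<^sub>R \<alpha> j) \<and>
        (\<forall>j\<in>{1..n}. c j \<ge> 0)}"

inductive_set refl_group :: "'a::euclidean_space set \<Rightarrow> ('a \<Rightarrow> 'a) set" for X where
  id: "id \<in> refl_group X"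
| step: "\<beta> \<in> X \<Longrightarrow> w \<in> refl_group X \<Longrightarrow> refl \<beta> \<circ> w \<in> refl_group X"

abbreviation weyl :: "'a::euclidean_space set \<Rightarrow> ('a \<Rightarrow> 'a) set" where
  "weyl R \<equiv> refl_group R"

definition wlen :: "'a::euclidean_space set \<Rightarrow> (nat \<Rightarrow> 'a) \<Rightarrow> nat \<Rightarrow> ('a \<Rightarrow> 'a) \<Rightarrow> nat" where
  "wlen R \<alpha> n w = card {\<beta> \<in> pos_roots R \<alpha> n. w \<beta> \<notin> pos_roots R \<alpha> n}"

definition bruhat_le :: "'a::euclidean_space set \<Rightarrow> (nat \<Rightarrow> 'a) \<Rightarrow> nat \<Rightarrow> ('a \<Rightarrow> 'a) \<Rightarrow> ('a \<Rightarrow> 'a) \<Rightarrow> bool" where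
  "bruhat_le R \<alpha> n u v \<longleftrightarrow>
     (u, v) \<in> {(w, refl \<beta> \<circ> w) | w \<beta>. w \<in> weyl R \<and> \<beta> \<in> pos_roots R \<alpha> n \<and>
                 wlen R \<alpha> n w < wlen R \<alpha> n (refl \<beta> \<circ> w)}\<^sup>*"

definition bruhat_less :: "'a::euclidean_space set \<Rightarrow> (nat \<Rightarrow> 'a) \<Rightarrow> nat \<Rightarrow> ('a \<Rightarrow> 'a) \<Rightarrow> ('a \<Rightarrow> 'a) \<Rightarrow> bool" where
  "bruhat_less R \<alpha> n u v \<longleftrightarrow> bruhat_le R \<alpha> n u v \<and> u \<noteq> v"

abbreviation weyl_par :: "(nat \<Rightarrow> 'a::euclidean_space) \<Rightarrow> nat \<Rightarrow> nat \<Rightarrow> ('a \<Rightarrow> 'a) set" where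
  "weyl_par \<alpha> n r \<equiv> refl_group (\<alpha> ` ({1..n} - {r}))"

definition min_reps :: "'a::euclidean_space set \<Rightarrow> (nat \<Rightarrow> 'a) \<Rightarrow> nat \<Rightarrow> nat \<Rightarrow> ('a \<Rightarrow> 'a) set" where
  "min_reps R \<alpha> n r = {w \<in> weyl R. \<forall>i\<in>{1..n} - {r}. w (\<alpha> i) \<in> pos_roots R \<alpha> n}"

end

theory Submission
  imports Defs
begin

fun wd :: "(nat \<Rightarrow> 'a::euclidean_space) \<Rightarrow> nat list \<Rightarrow> 'a \<Rightarrow> 'a" where
  "wd \<alpha> [] = id"
| "wd \<alpha> (k # l) = refl (\<alpha> k) \<circ> wd \<alpha> l"

lemma cp_add: "coroot_pair (x + y) b = coroot_pair x b + coroot_pair y b"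
  by (simp add: coroot_pair_def inner_add_left add_divide_distrib)
lemma cp_diff: "coroot_pair (x - y) b = coroot_pair x b - coroot_pair y b"
  by (simp add: coroot_pair_def inner_diff_left diff_divide_distrib)
lemma cp_scale: "coroot_pair (c *\<^sub>R x) b = c * coroot_pair x b"
  by (simp add: coroot_pair_def)
lemma cp_uminus: "coroot_pair (- x) b = - coroot_pair x b"
  by (simp add: coroot_pair_def)
lemma cp_uminus2: "coroot_pair x (- b) = - coroot_pair x b"
  by (simp add: coroot_pair_def)
lemma cp_self: "b \<noteq> 0 \<Longrightarrow> coroot_pair b b = 2"
  by (simp add: coroot_pair_def)

lemma refl_add: "refl b (x + y) = refl b x + refl b y"
  by (simp add: refl_def cp_add algebra_simps)
lemma refl_diff: "refl b (x - y) = refl b x - refl b y"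
  by (simp add: refl_def cp_diff algebra_simps)
lemma refl_scale: "refl b (c *\<^sub>R x) = c *\<^sub>R refl b x"
  by (simp add: refl_def cp_scale algebra_simps)
lemma refl_uminus: "refl b (- x) = - refl b x"
  by (simp add: refl_def cp_uminus algebra_simps)

lemma refl_linear: "linear (refl b)"
  by (rule linearI) (simp_all add: refl_add refl_scale)

lemma refl_inner: "b \<noteq> 0 \<Longrightarrow> refl b x \<bullet> refl b y = x \<bullet> y"
  by (simp add: refl_def coroot_pair_def inner_diff_left inner_diff_right algebra_simps)
    (simp add: field_simps inner_commute)

lemma refl_refl: "b \<noteq> 0 \<Longrightarrow> refl b (refl b x) = x"
  by (simp add: refl_def cp_diff cp_scale cp_self)

lemma refl_self: "b \<noteq> 0 \<Longrightarrow> refl b b = - b"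
  by (simp add: refl_def cp_self scaleR_2)

lemma refl_neg: "refl (- b) = refl b"
  by (rule ext) (simp add: refl_def coroot_pair_def)

lemma cp_orth:
  assumes "\<And>x y. v x \<bullet> v y = x \<bullet> y"
  shows "coroot_pair (v x) (v b) = coroot_pair x b"
  by (simp add: coroot_pair_def assms)

lemma refl_conj:
  assumes "linear v" "\<And>x y. v x \<bullet> v y = x \<bullet> y"
  shows "refl (v b) (v x) = v (refl b x)"
  using assms by (simp add: refl_def cp_orth linear_diff linear_scale)


lemma nf_exists:
  assumes dec: "\<And>x y. r x y \<Longrightarrow> h y < (h x :: nat)"
  shows "\<exists>m. r\<^sup>*\<^sup>* x m \<and> \<not> (\<exists>y. r m y)"
proof (induction "h x" arbitrary: x rule: less_induct)
  case less
  show ?case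
  proof (cases "\<exists>y. r x y")
    case True
    then obtain y where y: "r x y" by blast
    then obtain m where "r\<^sup>*\<^sup>* y m" "\<not> (\<exists>y. r m y)" using less dec by blast
    then show ?thesis using y by (meson converse_rtranclp_into_rtranclp)
  next
    case False
    then show ?thesis by blast
  qed
qed

lemma nf_unique:
  assumes dec: "\<And>x y. r x y \<Longrightarrow> h y < (h x :: nat)"
    and dia: "\<And>x y1 y2. r x y1 \<Longrightarrow> r x y2 \<Longrightarrow> y1 \<noteq> y2 \<Longrightarrow> \<exists>z. r y1 z \<and> r y2 z"
  shows "r\<^sup>*\<^sup>* x n1 \<Longrightarrow> r\<^sup>*\<^sup>* x n2 \<Longrightarrow> \<not> (\<exists>y. r n1 y) \<Longrightarrow> \<not> (\<exists>y. r n2 y) \<Longrightarrow> n1 = n2"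
proof (induction "h x" arbitrary: x n1 n2 rule: less_induct)
  case less
  show ?case
  proof (cases "\<exists>y. r x y")
    case False
    then have "n1 = x" "n2 = x" using less.prems by (metis converse_rtranclpE)+
    then show ?thesis by simp
  next
    case True
    obtain y1 where y1: "r x y1" "r\<^sup>*\<^sup>* y1 n1"
      using less.prems(1) True less.prems(3) by (metis converse_rtranclpE)
    obtain y2 where y2: "r x y2" "r\<^sup>*\<^sup>* y2 n2"
      using less.prems(2) True less.prems(4) by (metis converse_rtranclpE)
    show ?thesis
    proof (cases "y1 = y2")
      case True
      then show ?thesis using less.hyps[OF dec[OF y1(1)]] y1 y2 less.prems by blast
    next
      case False
      obtain z where z: "r y1 z" "r y2 z" using dia[OF y1(1) y2(1) False] by blast
      obtain m where m: "r\<^sup>*\<^sup>* z m" "\<not> (\<exists>y. r m y)" using nf_exists[of r h z] dec by blast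
      have "n1 = m" using less.hyps[OF dec[OF y1(1)] y1(2), of m] z(1) m less.prems(3)
        by (meson converse_rtranclp_into_rtranclp)
      moreover have "n2 = m" using less.hyps[OF dec[OF y2(1)] y2(2), of m] z(2) m less.prems(4)
        by (meson converse_rtranclp_into_rtranclp)
      ultimately show ?thesis by simp
    qed
  qed
qed

locale RS =
  fixes R :: "'a::euclidean_space set" and \<alpha> :: "nat \<Rightarrow> 'a" and n :: nat
    and lam :: "nat \<Rightarrow> 'a" and w :: 'a and r :: nat
  assumes rs: "root_system R" and base: "is_base R \<alpha> n"
    and lam: "\<forall>t\<in>{1..n}. \<forall>j\<in>{1..n}. \<alpha> j \<bullet> lam t = (if j = t then 1 else 0)"
    and r: "r \<in> {1..n}"
    and fundr: "\<forall>j\<in>{1..n}. coroot_pair w (\<alpha> j) = (if r = j then 1 else 0)"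
    and minu: "\<forall>\<beta>\<in>pos_roots R \<alpha> n. coroot_pair w \<beta> \<le> 1"
begin

abbreviation "Rp \<equiv> pos_roots R \<alpha> n"

lemma R_finite: "finite R" using rs by (simp add: root_system_def)
lemma zero_notin: "0 \<notin> R" using rs by (simp add: root_system_def)
lemma refl_closed: "a \<in> R \<Longrightarrow> b \<in> R \<Longrightarrow> refl a b \<in> R" using rs by (simp add: root_system_def)
lemma cp_int: "a \<in> R \<Longrightarrow> b \<in> R \<Longrightarrow> coroot_pair b a \<in> \<int>" using rs by (simp add: root_system_def)
lemma reduced: "a \<in> R \<Longrightarrow> c *\<^sub>R a \<in> R \<Longrightarrow> c = 1 \<or> c = -1" using rs by (simp add: root_system_def)
lemma nz: "a \<in> R \<Longrightarrow> a \<noteq> 0" using zero_notin by auto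
lemma alpha_R: "j \<in> {1..n} \<Longrightarrow> \<alpha> j \<in> R" using base by (auto simp: is_base_def)
lemma alpha_nz: "j \<in> {1..n} \<Longrightarrow> \<alpha> j \<noteq> 0" using alpha_R nz by blast
lemma lam_dot: "t \<in> {1..n} \<Longrightarrow> j \<in> {1..n} \<Longrightarrow> \<alpha> j \<bullet> lam t = (if j = t then 1 else 0)"
  using lam by auto

lemma sum_lam: "t \<in> {1..n} \<Longrightarrow> (\<Sum>j=1..n. f j *\<^sub>R \<alpha> j) \<bullet> lam t = f t"
proof -
  assume t: "t \<in> {1..n}"
  have "(\<Sum>j=1..n. f j *\<^sub>R \<alpha> j) \<bullet> lam t = (\<Sum>j=1..n. f j * (\<alpha> j \<bullet> lam t))"
    by (simp add: inner_sum_left)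
  also have "\<dots> = (\<Sum>j=1..n. if j = t then f j else 0)"
    by (rule sum.cong) (use lam_dot[OF t] in auto)
  also have "\<dots> = f t" using t by simp
  finally show ?thesis .
qed

lemma root_exp:
  assumes "b \<in> R"
  shows "b = (\<Sum>j=1..n. (b \<bullet> lam j) *\<^sub>R \<alpha> j)"
    and "\<forall>j\<in>{1..n}. b \<bullet> lam j \<in> \<int>"
    and "(\<forall>j\<in>{1..n}. 0 \<le> b \<bullet> lam j) \<or> (\<forall>j\<in>{1..n}. b \<bullet> lam j \<le> 0)"
proof -
  obtain c :: "nat \<Rightarrow> int" where c: "b = (\<Sum>j=1..n. of_int (c j) *\<^sub>R \<alpha> j)"
    "(\<forall>j\<in>{1..n}. c j \<ge> 0) \<or> (\<forall>j\<in>{1..n}. c j \<le> 0)"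
    using base assms unfolding is_base_def by blast
  have e: "\<And>t. t \<in> {1..n} \<Longrightarrow> b \<bullet> lam t = of_int (c t)"
    using c(1) sum_lam by simp
  have "(\<Sum>j=1..n. (b \<bullet> lam j) *\<^sub>R \<alpha> j) = (\<Sum>j=1..n. of_int (c j) *\<^sub>R \<alpha> j)"
    by (rule sum.cong) (auto simp: e)
  then show "b = (\<Sum>j=1..n. (b \<bullet> lam j) *\<^sub>R \<alpha> j)" using c(1) by simp
  show "\<forall>j\<in>{1..n}. b \<bullet> lam j \<in> \<int>" using e by simp
  show "(\<forall>j\<in>{1..n}. 0 \<le> b \<bullet> lam j) \<or> (\<forall>j\<in>{1..n}. b \<bullet> lam j \<le> 0)"
    using c(2) e by auto
qed

lemma pos_iff: "b \<in> Rp \<longleftrightarrow> b \<in> R \<and> (\<forall>j\<in>{1..n}. 0 \<le> b \<bullet> lam j)"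
proof
  assume "b \<in> Rp"
  then obtain c :: "nat \<Rightarrow> int" where "b \<in> R" "b = (\<Sum>j=1..n. of_int (c j) *\<^sub>R \<alpha> j)"
    "\<forall>j\<in>{1..n}. c j \<ge> 0" unfolding pos_roots_def by blast
  then show "b \<in> R \<and> (\<forall>j\<in>{1..n}. 0 \<le> b \<bullet> lam j)" using sum_lam by simp
next
  assume a: "b \<in> R \<and> (\<forall>j\<in>{1..n}. 0 \<le> b \<bullet> lam j)"
  have "\<forall>j. \<exists>m::int. j \<in> {1..n} \<longrightarrow> b \<bullet> lam j = of_int m"
    using root_exp(2)[of b] a by (auto elim!: Ints_cases)
  then obtain c :: "nat \<Rightarrow> int" where c: "\<forall>j\<in>{1..n}. b \<bullet> lam j = of_int (c j)" by metis
  have "b = (\<Sum>j=1..n. of_int (c j) *\<^sub>R \<alpha> j)"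
    using root_exp(1)[of b] a c by (metis (no_types, lifting) sum.cong)
  moreover have "\<forall>j\<in>{1..n}. c j \<ge> 0" using a c by force
  ultimately show "b \<in> Rp" using a unfolding pos_roots_def by blast
qed

lemma neg_closed: "b \<in> R \<Longrightarrow> - b \<in> R"
  using refl_closed[of b b] refl_self nz by metis

lemma pos_or_neg: "b \<in> R \<Longrightarrow> b \<in> Rp \<or> - b \<in> Rp"
  using root_exp(3)[of b] neg_closed[of b] by (auto simp: pos_iff)

lemma some_coef: "b \<in> R \<Longrightarrow> \<exists>j\<in>{1..n}. b \<bullet> lam j \<noteq> 0"
proof (rule ccontr)
  assume "b \<in> R" "\<not> (\<exists>j\<in>{1..n}. b \<bullet> lam j \<noteq> 0)"
  then have "b = (\<Sum>j=1..n. (0::real) *\<^sub>R \<alpha> j)" using root_exp(1)[of b]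
    by (metis (no_types, lifting) sum.cong)
  then have "b = 0" by simp
  with \<open>b \<in> R\<close> nz show False by blast
qed

lemma not_both: "b \<in> Rp \<Longrightarrow> - b \<notin> Rp"
proof
  assume "b \<in> Rp" "- b \<in> Rp"
  then have "b \<in> R" "\<forall>j\<in>{1..n}. b \<bullet> lam j = 0" by (auto simp: pos_iff intro: order.antisym)
  then show False using some_coef by blast
qed

lemma pos_if_coef: "b \<in> R \<Longrightarrow> j \<in> {1..n} \<Longrightarrow> 0 < b \<bullet> lam j \<Longrightarrow> b \<in> Rp"
  using pos_or_neg[of b] by (force simp: pos_iff)

lemma alpha_pos: "i \<in> {1..n} \<Longrightarrow> \<alpha> i \<in> Rp"
  using alpha_R by (simp add: pos_iff lam_dot)

lemma refl_alpha_coef: "i \<in> {1..n} \<Longrightarrow> j \<in> {1..n} \<Longrightarrow> j \<noteq> i \<Longrightarrow> refl (\<alpha> i) b \<bullet> lam j = b \<bullet> lam j"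
  by (simp add: refl_def inner_diff_left lam_dot)

lemma simple_refl_pos:
  assumes i: "i \<in> {1..n}" and b: "b \<in> Rp" "b \<noteq> \<alpha> i"
  shows "refl (\<alpha> i) b \<in> Rp"
proof -
  have bR: "b \<in> R" using b pos_iff by blast
  have "\<exists>j\<in>{1..n}. j \<noteq> i \<and> 0 < b \<bullet> lam j"
  proof (rule ccontr)
    assume "\<not> ?thesis"
    then have z: "\<forall>j\<in>{1..n}. j \<noteq> i \<longrightarrow> b \<bullet> lam j = 0" using b pos_iff by force
    have "b = (\<Sum>j=1..n. (b \<bullet> lam j) *\<^sub>R \<alpha> j)" using root_exp(1) bR .
    also have "\<dots> = (\<Sum>j=1..n. (if j = i then (b \<bullet> lam i) *\<^sub>R \<alpha> i else 0))"
      by (rule sum.cong) (auto simp: z)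
    also have "\<dots> = (b \<bullet> lam i) *\<^sub>R \<alpha> i" using i by simp
    finally have e: "b = (b \<bullet> lam i) *\<^sub>R \<alpha> i" .
    then have "b \<bullet> lam i = 1 \<or> b \<bullet> lam i = -1" using reduced[OF alpha_R[OF i]] bR by metis
    moreover have "0 \<le> b \<bullet> lam i" using b i pos_iff by blast
    ultimately have "b \<bullet> lam i = 1" by linarith
    with e b show False by simp
  qed
  then obtain j where j: "j \<in> {1..n}" "j \<noteq> i" "0 < b \<bullet> lam j" by blast
  show ?thesis
    using pos_if_coef[OF refl_closed[OF alpha_R[OF i] bR] j(1)] refl_alpha_coef[OF i j(1,2)] j(3) by simp
qed

lemma cartan_nonpos:
  assumes i: "i \<in> {1..n}" and j: "j \<in> {1..n}" and ij: "i \<noteq> j"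
  shows "coroot_pair (\<alpha> i) (\<alpha> j) \<le> 0"
proof (rule ccontr)
  assume "\<not> ?thesis"
  then have m: "coroot_pair (\<alpha> i) (\<alpha> j) > 0" by simp
  let ?b = "refl (\<alpha> j) (\<alpha> i)"
  have bR: "?b \<in> R" using refl_closed alpha_R i j by blast
  have c1: "?b \<bullet> lam i = 1" using refl_alpha_coef[OF j i ij] lam_dot i by simp
  have c2: "?b \<bullet> lam j = - coroot_pair (\<alpha> i) (\<alpha> j)"
    using ij lam_dot[OF j i] lam_dot[OF j j] by (simp add: refl_def inner_diff_left)
  show False using pos_or_neg[OF bR] c1 c2 m i j by (force simp: pos_iff)
qed

lemma cartan_zero_iff: "i \<in> {1..n} \<Longrightarrow> j \<in> {1..n} \<Longrightarrow> coroot_pair (\<alpha> i) (\<alpha> j) = 0 \<longleftrightarrow> \<alpha> i \<bullet> \<alpha> j = 0"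
  using alpha_nz[of j] by (simp add: coroot_pair_def)

lemma cartan_zero_sym: "i \<in> {1..n} \<Longrightarrow> j \<in> {1..n} \<Longrightarrow> coroot_pair (\<alpha> i) (\<alpha> j) = 0 \<Longrightarrow> coroot_pair (\<alpha> j) (\<alpha> i) = 0"
  using cartan_zero_iff by (simp add: inner_commute)


lemma wd_append: "wd \<alpha> (l1 @ l2) = wd \<alpha> l1 \<circ> wd \<alpha> l2"
  by (induction l1) auto

lemma wd_linear: "linear (wd \<alpha> l)"
proof (induction l)
  case Nil
  show ?case using linear_id by (metis wd.simps(1))
next
  case (Cons a l)
  then show ?case using linear_compose[OF Cons refl_linear] by (metis wd.simps(2))
qed

abbreviation ok :: "nat list \<Rightarrow> bool" where "ok l \<equiv> set l \<subseteq> {1..n}"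

lemma wd_inner: "ok l \<Longrightarrow> wd \<alpha> l x \<bullet> wd \<alpha> l y = x \<bullet> y"
  by (induction l arbitrary: x y) (auto simp: refl_inner alpha_nz)

lemma wd_R: "ok l \<Longrightarrow> b \<in> R \<Longrightarrow> wd \<alpha> l b \<in> R"
proof (induction l)
  case (Cons a l)
  then have "a \<in> {1..n}" by simp
  then show ?case using Cons refl_closed[OF alpha_R] by simp
qed simp

lemma wd_rev_left: "ok l \<Longrightarrow> wd \<alpha> (rev l) (wd \<alpha> l x) = x"
  by (induction l arbitrary: x) (auto simp: wd_append refl_refl alpha_nz)

lemma wd_rev_right: "ok l \<Longrightarrow> wd \<alpha> l (wd \<alpha> (rev l) x) = x"
  using wd_rev_left[of "rev l"] by simp

lemma wd_W: "ok l \<Longrightarrow> wd \<alpha> l \<in> weyl R"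
proof (induction l)
  case (Cons a l)
  then have "a \<in> {1..n}" by simp
  then show ?case using Cons refl_group.step[OF alpha_R, of a "wd \<alpha> l"] by (metis insert_subset list.simps(15) wd.simps(2))
qed (simp add: refl_group.id)

lemma wd_diff: "wd \<alpha> l (x - y) = wd \<alpha> l x - wd \<alpha> l y"
  using wd_linear linear_diff by blast
lemma wd_add: "wd \<alpha> l (x + y) = wd \<alpha> l x + wd \<alpha> l y"
  using wd_linear linear_add by blast
lemma wd_scale: "wd \<alpha> l (c *\<^sub>R x) = c *\<^sub>R wd \<alpha> l x"
  using wd_linear linear_scale by blast
lemma wd_uminus: "wd \<alpha> l (- x) = - wd \<alpha> l x"
  using wd_linear linear_neg by blast
lemma wd_sum: "wd \<alpha> l (\<Sum>j\<in>A. f j) = (\<Sum>j\<in>A. wd \<alpha> l (f j))"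
  using wd_linear linear_sum by blast

lemma wd_conj_pt: "ok l \<Longrightarrow> refl (wd \<alpha> l b) (wd \<alpha> l x) = wd \<alpha> l (refl b x)"
  by (rule refl_conj[OF wd_linear wd_inner])

lemma wd_conj: "ok l \<Longrightarrow> refl (wd \<alpha> l b) = wd \<alpha> l \<circ> refl b \<circ> wd \<alpha> (rev l)"
proof
  fix y assume l: "ok l"
  have "refl (wd \<alpha> l b) y = refl (wd \<alpha> l b) (wd \<alpha> l (wd \<alpha> (rev l) y))"
    using wd_rev_right[OF l] by simp
  also have "\<dots> = wd \<alpha> l (refl b (wd \<alpha> (rev l) y))" by (rule wd_conj_pt[OF l])
  finally show "refl (wd \<alpha> l b) y = (wd \<alpha> l \<circ> refl b \<circ> wd \<alpha> (rev l)) y" by simp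
qed

definition ht :: "'a \<Rightarrow> real" where "ht x = x \<bullet> (\<Sum>j=1..n. lam j)"

lemma ht_sum: "ht x = (\<Sum>j=1..n. x \<bullet> lam j)"
  by (simp add: ht_def inner_sum_right)

lemma ht_alpha: "i \<in> {1..n} \<Longrightarrow> ht (\<alpha> i) = 1"
proof -
  assume i: "i \<in> {1..n}"
  have "ht (\<alpha> i) = (\<Sum>j=1..n. if i = j then 1 else 0)"
    unfolding ht_sum by (rule sum.cong) (use lam_dot i in auto)
  then show ?thesis using i by simp
qed

lemma ht_diff_scale: "ht (x - c *\<^sub>R y) = ht x - c * ht y"
  by (simp add: ht_def inner_diff_left)

lemma ht_pos: "b \<in> Rp \<Longrightarrow> 0 < ht b"
proof -
  assume b: "b \<in> Rp"
  then have bR: "b \<in> R" and nn: "\<forall>j\<in>{1..n}. 0 \<le> b \<bullet> lam j" using pos_iff by auto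
  obtain j where j: "j \<in> {1..n}" "b \<bullet> lam j \<noteq> 0" using some_coef[OF bR] by blast
  have "0 < b \<bullet> lam j" using j nn by force
  also have "b \<bullet> lam j \<le> (\<Sum>j=1..n. b \<bullet> lam j)"
    by (rule member_le_sum) (use nn j in auto)
  finally show ?thesis by (simp add: ht_sum)
qed

lemma pos_root_word_aux:
  "\<forall>b\<in>Rp. ht b \<le> real N \<longrightarrow> (\<exists>l i. ok l \<and> i \<in> {1..n} \<and> b = wd \<alpha> l (\<alpha> i))"
proof (induction N)
  case 0
  then show ?case using ht_pos by force
next
  case (Suc N)
  show ?case
  proof (intro ballI impI)
    fix b assume b: "b \<in> Rp" and hb: "ht b \<le> real (Suc N)"
    show "\<exists>l i. ok l \<and> i \<in> {1..n} \<and> b = wd \<alpha> l (\<alpha> i)"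
    proof (cases "\<exists>i\<in>{1..n}. b = \<alpha> i")
      case True
      then show ?thesis by (metis empty_subsetI id_apply list.set(1) wd.simps(1))
    next
      case False
      have bR: "b \<in> R" and nn: "\<forall>j\<in>{1..n}. 0 \<le> b \<bullet> lam j" using b pos_iff by auto
      have "0 < b \<bullet> b" using nz[OF bR] by simp
      also have "b \<bullet> b = b \<bullet> (\<Sum>j=1..n. (b \<bullet> lam j) *\<^sub>R \<alpha> j)"
        using root_exp(1)[OF bR] by simp
      also have "\<dots> = (\<Sum>j=1..n. (b \<bullet> lam j) * (b \<bullet> \<alpha> j))"
        by (simp add: inner_sum_right)
      finally have "0 < (\<Sum>j=1..n. (b \<bullet> lam j) * (b \<bullet> \<alpha> j))" .
      then obtain j where j: "j \<in> {1..n}" "0 < (b \<bullet> lam j) * (b \<bullet> \<alpha> j)"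
        by (metis (no_types, lifting) not_le sum_nonpos)
      have bj: "0 < b \<bullet> \<alpha> j" proof -
        have "0 \<le> b \<bullet> lam j" using nn j(1) by blast
        then show ?thesis using j(2) by (auto simp: zero_less_mult_iff)
      qed
      let ?m = "coroot_pair b (\<alpha> j)"
      have mpos: "0 < ?m" using bj alpha_nz[OF j(1)] by (simp add: coroot_pair_def)
      have mint: "?m \<in> \<int>" using cp_int alpha_R j bR by blast
      have m1: "1 \<le> ?m" using mpos mint by (auto elim!: Ints_cases)
      let ?b' = "refl (\<alpha> j) b"
      have b'pos: "?b' \<in> Rp" using simple_refl_pos j b False by blast
      have "ht ?b' = ht b - ?m" using ht_diff_scale ht_alpha[OF j(1)] by (simp add: refl_def)
      then have "ht ?b' \<le> real N" using hb m1 by simp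
      then obtain l i where li: "ok l" "i \<in> {1..n}" "?b' = wd \<alpha> l (\<alpha> i)" using Suc.IH b'pos by blast
      have "b = refl (\<alpha> j) ?b'" using refl_refl alpha_nz j by metis
      also have "\<dots> = wd \<alpha> (j # l) (\<alpha> i)" using li by simp
      finally show ?thesis using li j by (metis insert_subset list.simps(15))
    qed
  qed
qed

lemma pos_root_word: "b \<in> Rp \<Longrightarrow> \<exists>l i. ok l \<and> i \<in> {1..n} \<and> b = wd \<alpha> l (\<alpha> i)"
  using pos_root_word_aux[of "nat \<lceil>ht b\<rceil>"] by (meson of_nat_ceiling real_nat_ceiling_ge)

lemma W_word: "v \<in> weyl R \<Longrightarrow> \<exists>l. ok l \<and> v = wd \<alpha> l"
proof (induction rule: refl_group.induct)
  case id
  then show ?case by (metis empty_subsetI list.set(1) wd.simps(1))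
next
  case (step b v)
  then obtain l where l: "ok l" "v = wd \<alpha> l" by blast
  obtain g where g: "g \<in> Rp" "refl b = refl g"
    using pos_or_neg[OF step.hyps(1)] refl_neg by metis
  obtain m i where mi: "ok m" "i \<in> {1..n}" "g = wd \<alpha> m (\<alpha> i)" using pos_root_word g by blast
  have "refl b \<circ> v = wd \<alpha> (m @ i # rev m @ l)"
    using g(2) mi wd_conj[OF mi(1)] l by (simp add: wd_append comp_assoc)
  moreover have "ok (m @ i # rev m @ l)" using mi l by auto
  ultimately show ?case by blast
qed

lemma discrete_ivt: "P m \<Longrightarrow> \<not> P 0 \<Longrightarrow> \<exists>t<m. \<not> P t \<and> P (Suc t)"
  by (induction m) (auto, metis less_Suc_eq)

lemma core_aux: "ok l \<Longrightarrow> (\<forall>i\<in>{1..n}. wd \<alpha> l (\<alpha> i) \<in> Rp) \<Longrightarrow> wd \<alpha> l = id"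
proof (induction "length l" arbitrary: l rule: less_induct)
  case less
  show ?case
  proof (cases l rule: rev_exhaust)
    case Nil
    then show ?thesis by simp
  next
    case (snoc l' k)
    have k: "k \<in> {1..n}" and l': "ok l'" using less.prems snoc by auto
    have "wd \<alpha> l (\<alpha> k) = - wd \<alpha> l' (\<alpha> k)"
      using snoc refl_self[OF alpha_nz[OF k]] by (simp add: wd_append wd_uminus)
    then have neg: "wd \<alpha> l' (\<alpha> k) \<notin> Rp" using less.prems(2) k not_both by fastforce
    define f where "f t = wd \<alpha> (drop t l') (\<alpha> k)" for t
    have "f (length l') \<in> Rp" using alpha_pos[OF k] by (simp add: f_def)
    moreover have "f 0 \<notin> Rp" using neg by (simp add: f_def)
    ultimately obtain t where t: "t < length l'" "f t \<notin> Rp" "f (Suc t) \<in> Rp"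
      using discrete_ivt[of "\<lambda>t. f t \<in> Rp"] by blast
    define j where "j = l' ! t"
    have j: "j \<in> {1..n}" using l' t(1) j_def nth_mem by blast
    have dt: "drop t l' = j # drop (Suc t) l'" using t(1) j_def by (simp add: Cons_nth_drop_Suc)
    have ft: "f t = refl (\<alpha> j) (f (Suc t))" using dt by (simp add: f_def)
    have fj: "f (Suc t) = \<alpha> j" using simple_refl_pos[OF j t(3)] t(2) ft by metis
    define v where "v = wd \<alpha> (drop (Suc t) l')"
    have okd: "ok (drop (Suc t) l')" using l' by (meson order_trans set_drop_subset)
    have vk: "v (\<alpha> k) = \<alpha> j" using fj by (simp add: f_def v_def)
    have conj: "refl (\<alpha> j) \<circ> v = v \<circ> refl (\<alpha> k)"
    proof
      fix x show "(refl (\<alpha> j) \<circ> v) x = (v \<circ> refl (\<alpha> k)) x"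
        using wd_conj_pt[OF okd, of "\<alpha> k" x] vk by (simp add: v_def)
    qed
    have l'eq: "l' = take t l' @ j # drop (Suc t) l'" using dt by (metis append_take_drop_id)
    have "wd \<alpha> l = wd \<alpha> (take t l') \<circ> (refl (\<alpha> j) \<circ> v) \<circ> refl (\<alpha> k)"
      using snoc l'eq by (metis (no_types, lifting) append_Cons append_Nil append_assoc comp_assoc comp_id wd.simps wd_append v_def)
    also have "\<dots> = wd \<alpha> (take t l') \<circ> v \<circ> (refl (\<alpha> k) \<circ> refl (\<alpha> k))"
      using conj by (simp add: comp_assoc)
    also have "refl (\<alpha> k) \<circ> refl (\<alpha> k) = id" using refl_refl[OF alpha_nz[OF k]] by auto
    finally have eq: "wd \<alpha> l = wd \<alpha> (take t l' @ drop (Suc t) l')" by (simp add: wd_append v_def o_def)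
    have len: "length (take t l' @ drop (Suc t) l') < length l" using snoc t(1) by simp
    have okn: "ok (take t l' @ drop (Suc t) l')" using l' okd by (auto dest: in_set_takeD)
    show ?thesis using less.hyps[OF len okn] less.prems(2) eq by simp
  qed
qed


lemma core: "v \<in> weyl R \<Longrightarrow> (\<forall>i\<in>{1..n}. v (\<alpha> i) \<in> Rp) \<Longrightarrow> v = id"
  using W_word core_aux by blast

lemma w_alpha: "j \<in> {1..n} \<Longrightarrow> w \<bullet> \<alpha> j = (if j = r then (\<alpha> r \<bullet> \<alpha> r) / 2 else 0)"
proof -
  assume j: "j \<in> {1..n}"
  have h: "2 * (w \<bullet> \<alpha> j) / (\<alpha> j \<bullet> \<alpha> j) = (if r = j then 1 else 0)"
    using fundr j by (simp add: coroot_pair_def)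
  have pos: "\<alpha> j \<bullet> \<alpha> j > 0" using alpha_nz j by simp
  show ?thesis by (cases "j = r") (use h pos in \<open>auto simp: field_simps\<close>)
qed

lemma w_alpha_r_pos: "0 < w \<bullet> \<alpha> r"
proof -
  have "0 < \<alpha> r \<bullet> \<alpha> r" using alpha_nz[OF r] by simp
  moreover have "w \<bullet> \<alpha> r = (\<alpha> r \<bullet> \<alpha> r) / 2" using w_alpha[OF r] by simp
  ultimately show ?thesis by linarith
qed

lemma w_dot: "b \<in> R \<Longrightarrow> w \<bullet> b = (b \<bullet> lam r) * (w \<bullet> \<alpha> r)"
proof -
  assume bR: "b \<in> R"
  have "w \<bullet> b = w \<bullet> (\<Sum>j=1..n. (b \<bullet> lam j) *\<^sub>R \<alpha> j)" using root_exp(1)[OF bR] by simp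
  also have "\<dots> = (\<Sum>j=1..n. (b \<bullet> lam j) * (w \<bullet> \<alpha> j))" by (simp add: inner_sum_right)
  also have "\<dots> = (\<Sum>j=1..n. if j = r then (b \<bullet> lam r) * (w \<bullet> \<alpha> r) else 0)"
    by (rule sum.cong) (use w_alpha in auto)
  also have "\<dots> = (b \<bullet> lam r) * (w \<bullet> \<alpha> r)" using r by simp
  finally show ?thesis .
qed

lemma cp_w_pos: "b \<in> R \<Longrightarrow> 0 < coroot_pair w b \<Longrightarrow> b \<in> Rp"
proof -
  assume bR: "b \<in> R" and p: "0 < coroot_pair w b"
  have "0 < b \<bullet> b" using nz[OF bR] by simp
  then have "2 * (w \<bullet> b) = coroot_pair w b * (b \<bullet> b)" by (simp add: coroot_pair_def)
  then have "0 < w \<bullet> b" using p \<open>0 < b \<bullet> b\<close> by (smt (verit) mult_pos_pos)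
  then have "0 < b \<bullet> lam r" using w_dot[OF bR] w_alpha_r_pos by (simp add: zero_less_mult_iff)
  then show ?thesis using pos_if_coef bR r by blast
qed

lemma cp_w_nonneg: "b \<in> Rp \<Longrightarrow> 0 \<le> coroot_pair w b"
proof -
  assume b: "b \<in> Rp"
  then have bR: "b \<in> R" and "0 \<le> b \<bullet> lam r" using pos_iff r by auto
  then have "0 \<le> w \<bullet> b" using w_dot[OF bR] w_alpha_r_pos by simp
  then show ?thesis by (simp add: coroot_pair_def)
qed

definition cv :: "nat \<Rightarrow> 'a" where "cv j = (2 / (\<alpha> j \<bullet> \<alpha> j)) *\<^sub>R \<alpha> j"

definition Zc :: "'a \<Rightarrow> bool" where
  "Zc x \<longleftrightarrow> (\<exists>f::nat \<Rightarrow> int. x = (\<Sum>j=1..n. of_int (f j) *\<^sub>R cv j))"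

lemma Zc_cv: "i \<in> {1..n} \<Longrightarrow> Zc (cv i)"
proof -
  assume i: "i \<in> {1..n}"
  have "(\<Sum>j=1..n. of_int (if j = i then 1 else 0) *\<^sub>R cv j) = (\<Sum>j=1..n. if j = i then cv i else 0)"
    by (rule sum.cong) auto
  also have "\<dots> = cv i" using i by simp
  finally show ?thesis unfolding Zc_def by metis
qed

lemma cv_alpha: "j \<in> {1..n} \<Longrightarrow> k \<in> {1..n} \<Longrightarrow> cv j \<bullet> \<alpha> k = coroot_pair (\<alpha> k) (\<alpha> j)"
  by (simp add: cv_def coroot_pair_def inner_commute)

lemma Zc_refl:
  assumes k: "k \<in> {1..n}" and x: "Zc x"
  shows "Zc (refl (\<alpha> k) x)"
proof -
  obtain f :: "nat \<Rightarrow> int" where f: "x = (\<Sum>j=1..n. of_int (f j) *\<^sub>R cv j)" using x Zc_def by blast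
  have "x \<bullet> \<alpha> k = (\<Sum>j=1..n. of_int (f j) * (cv j \<bullet> \<alpha> k))" using f by (simp add: inner_sum_left)
  also have "\<dots> \<in> \<int>"
  proof (rule Ints_sum)
    fix j assume "j \<in> {1..n}"
    then show "of_int (f j) * (cv j \<bullet> \<alpha> k) \<in> \<int>"
      using cv_alpha k cp_int alpha_R by (simp add: Ints_mult)
  qed
  finally obtain m :: int where m: "x \<bullet> \<alpha> k = of_int m" by (auto elim: Ints_cases)
  have e: "refl (\<alpha> k) x = x - of_int m *\<^sub>R cv k"
    using m alpha_nz[OF k] by (simp add: refl_def coroot_pair_def cv_def)
  have "(\<Sum>j=1..n. of_int (f j - (if j = k then m else 0)) *\<^sub>R cv j)
      = (\<Sum>j=1..n. of_int (f j) *\<^sub>R cv j - (if j = k then of_int m *\<^sub>R cv k else 0))"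
    by (rule sum.cong) (auto simp: scaleR_diff_left)
  also have "\<dots> = (\<Sum>j=1..n. of_int (f j) *\<^sub>R cv j) - (\<Sum>j=1..n. (if j = k then of_int m *\<^sub>R cv k else 0))"
    by (rule sum_subtractf)
  also have "\<dots> = refl (\<alpha> k) x" using k e f by simp
  finally show ?thesis unfolding Zc_def by metis
qed

lemma Zc_wd: "ok l \<Longrightarrow> Zc x \<Longrightarrow> Zc (wd \<alpha> l x)"
  by (induction l) (auto intro: Zc_refl)

lemma w_Zc: "Zc x \<Longrightarrow> w \<bullet> x \<in> \<int>"
proof -
  assume "Zc x"
  then obtain f :: "nat \<Rightarrow> int" where f: "x = (\<Sum>j=1..n. of_int (f j) *\<^sub>R cv j)" using Zc_def by blast
  have "w \<bullet> x = (\<Sum>j=1..n. of_int (f j) * (w \<bullet> cv j))" using f by (simp add: inner_sum_right)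
  also have "\<dots> \<in> \<int>"
  proof (rule Ints_sum)
    fix j assume j: "j \<in> {1..n}"
    have "w \<bullet> cv j = coroot_pair w (\<alpha> j)" by (simp add: cv_def coroot_pair_def)
    then have "w \<bullet> cv j \<in> \<int>" using fundr j by auto
    then show "of_int (f j) * (w \<bullet> cv j) \<in> \<int>" by (simp add: Ints_mult)
  qed
  finally show ?thesis .
qed

lemma cp_w_int: "b \<in> R \<Longrightarrow> coroot_pair w b \<in> \<int>"
proof -
  assume bR: "b \<in> R"
  obtain g where g: "g \<in> Rp" "b = g \<or> b = - g" using pos_or_neg[OF bR] by (metis minus_minus)
  obtain l i where li: "ok l" "i \<in> {1..n}" "g = wd \<alpha> l (\<alpha> i)" using pos_root_word g(1) by blast
  have "coroot_pair w g = w \<bullet> wd \<alpha> l (cv i)"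
    using li wd_inner[OF li(1), of "\<alpha> i" "\<alpha> i"] by (simp add: coroot_pair_def cv_def wd_scale)
  also have "\<dots> \<in> \<int>" using w_Zc Zc_wd Zc_cv li by blast
  finally show ?thesis using g(2) cp_uminus2 by (metis Ints_minus)
qed

lemma cp_w_range: "b \<in> R \<Longrightarrow> coroot_pair w b = -1 \<or> coroot_pair w b = 0 \<or> coroot_pair w b = 1"
proof -
  assume bR: "b \<in> R"
  have "-1 \<le> coroot_pair w b \<and> coroot_pair w b \<le> 1"
    using pos_or_neg[OF bR] minu cp_w_nonneg cp_uminus2[of w b] by force
  moreover obtain m :: int where "coroot_pair w b = of_int m" using cp_w_int[OF bR] by (auto elim: Ints_cases)
  ultimately show ?thesis by auto
qed

abbreviation "WP \<equiv> min_reps R \<alpha> n r"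

lemma WP_inj:
  assumes t1: "\<tau> \<in> WP" and t2: "\<tau>' \<in> WP" and eq: "\<tau> w = \<tau>' w"
  shows "\<tau> = \<tau>'"
proof -
  obtain l1 where l1: "ok l1" "\<tau> = wd \<alpha> l1" using t1 W_word by (auto simp: min_reps_def)
  obtain l2 where l2: "ok l2" "\<tau>' = wd \<alpha> l2" using t2 W_word by (auto simp: min_reps_def)
  define u where "u = wd \<alpha> (rev l1 @ l2)"
  have oku: "ok (rev l1 @ l2)" using l1 l2 by auto
  have tu: "\<And>x. \<tau> (u x) = \<tau>' x" using l1 l2 wd_rev_right[OF l1(1)] by (simp add: u_def wd_append)
  have uw: "u w = w" using eq l1 l2 wd_rev_left[OF l1(1)] by (simp add: u_def wd_append) metis
  have "\<forall>i\<in>{1..n}. u (\<alpha> i) \<in> Rp"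
  proof
    fix i assume i: "i \<in> {1..n}"
    let ?g = "u (\<alpha> i)"
    have gR: "?g \<in> R" using wd_R[OF oku alpha_R[OF i]] by (simp add: u_def)
    have "w \<bullet> ?g = w \<bullet> \<alpha> i" using wd_inner[OF oku, of w "\<alpha> i"] uw by (simp add: u_def)
    then have gd: "(?g \<bullet> lam r) * (w \<bullet> \<alpha> r) = w \<bullet> \<alpha> i" using w_dot[OF gR] by simp
    show "?g \<in> Rp"
    proof (cases "i = r")
      case True
      then have "0 < ?g \<bullet> lam r" using gd w_alpha_r_pos by (simp add: zero_less_mult_iff)
      then show ?thesis using pos_if_coef gR r by blast
    next
      case False
      then have g0: "?g \<bullet> lam r = 0" using gd w_alpha[OF i] w_alpha_r_pos by simp
      show ?thesis
      proof (rule ccontr)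
        assume "?g \<notin> Rp"
        then have d: "- ?g \<in> Rp" using pos_or_neg[OF gR] by blast
        let ?d = "- ?g"
        have dR: "?d \<in> R" using d pos_iff by blast
        have d0: "?d \<bullet> lam r = 0" using g0 by simp
        have tdR: "\<tau> ?d \<in> R" using l1 wd_R dR by blast
        have "\<forall>t\<in>{1..n}. 0 \<le> \<tau> ?d \<bullet> lam t"
        proof
          fix t assume t: "t \<in> {1..n}"
          have "\<tau> ?d = (\<Sum>j=1..n. (?d \<bullet> lam j) *\<^sub>R \<tau> (\<alpha> j))"
            using root_exp(1)[OF dR] l1(2) by (metis (no_types, lifting) sum.cong wd_scale wd_sum)
          then have "\<tau> ?d \<bullet> lam t = (\<Sum>j=1..n. (?d \<bullet> lam j) * (\<tau> (\<alpha> j) \<bullet> lam t))"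
            by (simp add: inner_sum_left)
          also have "\<dots> \<ge> 0"
          proof (rule sum_nonneg)
            fix j assume j: "j \<in> {1..n}"
            show "0 \<le> (?d \<bullet> lam j) * (\<tau> (\<alpha> j) \<bullet> lam t)"
            proof (cases "j = r")
              case True then show ?thesis using d0 by simp
            next
              case False
              then have "\<tau> (\<alpha> j) \<in> Rp" using t1 j by (auto simp: min_reps_def)
              then have "0 \<le> \<tau> (\<alpha> j) \<bullet> lam t" using pos_iff t by blast
              moreover have "0 \<le> ?d \<bullet> lam j" using d pos_iff j by blast
              ultimately show ?thesis using mult_nonneg_nonneg by blast
            qed
          qed
          finally show "0 \<le> \<tau> ?d \<bullet> lam t" .
        qed
        then have "\<tau> ?d \<in> Rp" using tdR pos_iff by blast
        moreover have "\<tau> ?d = - \<tau>' (\<alpha> i)" using tu l1(2) wd_uminus by metis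
        moreover have "\<tau>' (\<alpha> i) \<in> Rp" using t2 i False by (auto simp: min_reps_def)
        ultimately show False using not_both by metis
      qed
    qed
  qed
  then have "u = id" using core_aux[OF oku] by (simp add: u_def)
  then show ?thesis using tu by fastforce
qed


lemma Rp_sub: "Rp \<subseteq> R" by (auto simp: pos_roots_def)
lemma Rp_finite: "finite Rp" using Rp_sub R_finite finite_subset by blast

lemma wd_inj: "ok l \<Longrightarrow> wd \<alpha> l x = wd \<alpha> l y \<Longrightarrow> x = y"
  by (metis wd_rev_left)

lemma len_step:
  assumes l: "ok l" and i: "i \<in> {1..n}" and d: "d \<in> Rp" and vd: "wd \<alpha> l d = \<alpha> i"
  shows "wlen R \<alpha> n (refl (\<alpha> i) \<circ> wd \<alpha> l) = Suc (wlen R \<alpha> n (wd \<alpha> l))"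
proof -
  let ?v = "wd \<alpha> l"
  have eq: "{b \<in> Rp. (refl (\<alpha> i) \<circ> ?v) b \<notin> Rp} = insert d {b \<in> Rp. ?v b \<notin> Rp}"
  proof (intro equalityI subsetI)
    fix b assume b: "b \<in> {b \<in> Rp. (refl (\<alpha> i) \<circ> ?v) b \<notin> Rp}"
    then have bp: "b \<in> Rp" and nb: "refl (\<alpha> i) (?v b) \<notin> Rp" by auto
    show "b \<in> insert d {b \<in> Rp. ?v b \<notin> Rp}"
    proof (cases "?v b \<in> Rp")
      case True
      then have "?v b = \<alpha> i" using simple_refl_pos[OF i] nb by blast
      then have "b = d" using wd_inj[OF l] vd by metis
      then show ?thesis by simp
    next
      case False
      then show ?thesis using bp by simp
    qed
  next
    fix b assume b: "b \<in> insert d {b \<in> Rp. ?v b \<notin> Rp}"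
    show "b \<in> {b \<in> Rp. (refl (\<alpha> i) \<circ> ?v) b \<notin> Rp}"
    proof (cases "b = d")
      case True
      then show ?thesis using d vd refl_self[OF alpha_nz[OF i]] not_both[OF alpha_pos[OF i]] by simp
    next
      case False
      then have bp: "b \<in> Rp" and nb: "?v b \<notin> Rp" using b by auto
      have vbR: "?v b \<in> R" using wd_R[OF l] bp Rp_sub by blast
      have m: "- ?v b \<in> Rp" using pos_or_neg[OF vbR] nb by blast
      have "- ?v b \<noteq> \<alpha> i"
      proof
        assume "- ?v b = \<alpha> i"
        then have "?v (- b) = ?v d" using vd by (simp add: wd_uminus)
        then have "- b = d" using wd_inj[OF l] by blast
        then show False using not_both[OF bp] d by simp
      qed
      then have "refl (\<alpha> i) (- ?v b) \<in> Rp" using simple_refl_pos[OF i m] by blast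
      then have "refl (\<alpha> i) (?v b) \<notin> Rp" using not_both refl_uminus by metis
      then show ?thesis using bp by simp
    qed
  qed
  have fin: "finite {b \<in> Rp. ?v b \<notin> Rp}" using Rp_finite by simp
  have "d \<notin> {b \<in> Rp. ?v b \<notin> Rp}" using vd alpha_pos[OF i] by simp
  then show ?thesis unfolding wlen_def using eq fin by simp
qed

lemma wlen_id: "wlen R \<alpha> n id = 0"
  by (simp add: wlen_def)

lemma wlen_le: "wlen R \<alpha> n v \<le> card Rp"
  unfolding wlen_def by (rule card_mono[OF Rp_finite]) auto

lemma bruhat_len: "bruhat_le R \<alpha> n u v \<Longrightarrow> u = v \<or> wlen R \<alpha> n u < wlen R \<alpha> n v"
  unfolding bruhat_le_def
proof (induction rule: rtrancl_induct)
  case base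
  then show ?case by simp
next
  case (step y z)
  then show ?case by auto
qed

definition Lam :: "'a set" where "Lam = {wd \<alpha> l w | l. ok l}"
abbreviation pp :: "nat \<Rightarrow> 'a \<Rightarrow> real" where "pp k \<mu> \<equiv> coroot_pair \<mu> (\<alpha> k)"
definition cnt :: "nat \<Rightarrow> 'a \<Rightarrow> real" where "cnt j \<mu> = (w - \<mu>) \<bullet> lam j"
definition H :: "'a \<Rightarrow> real" where "H \<mu> = ht (w - \<mu>)"
definition dn :: "'a \<Rightarrow> 'a \<Rightarrow> bool" where
  "dn \<mu> \<nu> \<longleftrightarrow> \<mu> \<in> Lam \<and> (\<exists>k\<in>{1..n}. pp k \<mu> = 1 \<and> \<nu> = \<mu> - \<alpha> k)"

lemma Lam_w: "w \<in> Lam"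
  unfolding Lam_def by (metis (mono_tags, lifting) empty_subsetI id_apply list.set(1) mem_Collect_eq wd.simps(1))

lemma Lam_refl: "\<mu> \<in> Lam \<Longrightarrow> k \<in> {1..n} \<Longrightarrow> refl (\<alpha> k) \<mu> \<in> Lam"
proof -
  assume "\<mu> \<in> Lam" "k \<in> {1..n}"
  then obtain l where "ok l" "\<mu> = wd \<alpha> l w" unfolding Lam_def by blast
  then have "ok (k # l)" "refl (\<alpha> k) \<mu> = wd \<alpha> (k # l) w" using \<open>k \<in> {1..n}\<close> by auto
  then show ?thesis unfolding Lam_def by blast
qed

lemma W_Lam: "\<tau> \<in> weyl R \<Longrightarrow> \<tau> w \<in> Lam"
  using W_word unfolding Lam_def by blast

lemma pp_range: "\<mu> \<in> Lam \<Longrightarrow> k \<in> {1..n} \<Longrightarrow> pp k \<mu> = -1 \<or> pp k \<mu> = 0 \<or> pp k \<mu> = 1"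
proof -
  assume m: "\<mu> \<in> Lam" and k: "k \<in> {1..n}"
  then obtain l where l: "ok l" "\<mu> = wd \<alpha> l w" unfolding Lam_def by blast
  let ?g = "wd \<alpha> (rev l) (\<alpha> k)"
  have gR: "?g \<in> R" using wd_R alpha_R[OF k] l(1) by simp
  have "\<alpha> k = wd \<alpha> l ?g" using wd_rev_right[OF l(1)] by simp
  then have "pp k \<mu> = coroot_pair (wd \<alpha> l w) (wd \<alpha> l ?g)" using l by simp
  also have "\<dots> = coroot_pair w ?g" using cp_orth wd_inner[OF l(1)] by blast
  finally show ?thesis using cp_w_range[OF gR] by simp
qed

lemma refl_pp: "refl (\<alpha> k) \<mu> = \<mu> - pp k \<mu> *\<^sub>R \<alpha> k"
  by (simp add: refl_def)

lemma pp_diff: "pp j (\<mu> - \<alpha> k) = pp j \<mu> - coroot_pair (\<alpha> k) (\<alpha> j)"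
  by (simp add: cp_diff)
lemma pp_add: "pp j (\<mu> + \<alpha> k) = pp j \<mu> + coroot_pair (\<alpha> k) (\<alpha> j)"
  by (simp add: cp_add)
lemma cp_aa: "k \<in> {1..n} \<Longrightarrow> coroot_pair (\<alpha> k) (\<alpha> k) = 2"
  using cp_self alpha_nz by blast

lemma cnt_diff: "j \<in> {1..n} \<Longrightarrow> k \<in> {1..n} \<Longrightarrow> cnt j (\<mu> - \<alpha> k) = cnt j \<mu> + (if k = j then 1 else 0)"
  by (simp add: cnt_def inner_diff_left lam_dot algebra_simps)
lemma cnt_add: "j \<in> {1..n} \<Longrightarrow> k \<in> {1..n} \<Longrightarrow> cnt j (\<mu> + \<alpha> k) = cnt j \<mu> - (if k = j then 1 else 0)"
  by (simp add: cnt_def inner_diff_left inner_add_left lam_dot algebra_simps)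
lemma H_diff: "k \<in> {1..n} \<Longrightarrow> H (\<mu> - \<alpha> k) = H \<mu> + 1"
  using ht_alpha by (simp add: H_def ht_def inner_diff_left inner_add_left algebra_simps)
lemma H_add: "k \<in> {1..n} \<Longrightarrow> H (\<mu> + \<alpha> k) = H \<mu> - 1"
  using ht_alpha by (simp add: H_def ht_def inner_diff_left inner_add_left algebra_simps)
lemma H_w: "H w = 0" by (simp add: H_def ht_def)
lemma cnt_w: "cnt j w = 0" by (simp add: cnt_def)

lemma dn_Lam: "dn \<mu> \<nu> \<Longrightarrow> \<nu> \<in> Lam"
  unfolding dn_def using Lam_refl refl_pp by (metis scaleR_one)

lemma dns_Lam: "dn\<^sup>*\<^sup>* \<mu> \<nu> \<Longrightarrow> \<mu> \<in> Lam \<Longrightarrow> \<nu> \<in> Lam"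
  by (induction rule: rtranclp_induct) (auto intro: dn_Lam)

lemma reach_refl: "dn\<^sup>*\<^sup>* w \<mu> \<Longrightarrow> \<forall>k\<in>{1..n}. dn\<^sup>*\<^sup>* w (refl (\<alpha> k) \<mu>)"
proof (induction rule: rtranclp_induct)
  case base
  show ?case
  proof
    fix k assume k: "k \<in> {1..n}"
    show "dn\<^sup>*\<^sup>* w (refl (\<alpha> k) w)"
    proof (cases "k = r")
      case True
      then have "pp k w = 1" using fundr k by simp
      then have "dn w (refl (\<alpha> k) w)" using Lam_w k by (auto simp: dn_def refl_pp)
      then show ?thesis by blast
    next
      case False
      then have "pp k w = 0" using fundr k by simp
      then show ?thesis by (simp add: refl_pp)
    qed
  qed
next
  case (step \<mu> \<mu>')
  from step.hyps(2) obtain j where j: "j \<in> {1..n}" "pp j \<mu> = 1" "\<mu>' = \<mu> - \<alpha> j" and mL: "\<mu> \<in> Lam"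
    unfolding dn_def by blast
  have m'L: "\<mu>' \<in> Lam" using dn_Lam step.hyps(2) by blast
  have r': "dn\<^sup>*\<^sup>* w \<mu>'" using step.hyps by (meson rtranclp.rtrancl_into_rtrancl)
  show ?case
  proof
    fix k assume k: "k \<in> {1..n}"
    consider "pp k \<mu>' = 0" | "pp k \<mu>' = 1" | "pp k \<mu>' = -1" using pp_range[OF m'L k] by blast
    then show "dn\<^sup>*\<^sup>* w (refl (\<alpha> k) \<mu>')"
    proof cases
      case 1 then show ?thesis using r' by (simp add: refl_pp)
    next
      case 2
      then have "dn \<mu>' (refl (\<alpha> k) \<mu>')" using m'L k by (auto simp: dn_def refl_pp)
      then show ?thesis using r' by (meson rtranclp.rtrancl_into_rtrancl)
    next
      case 3
      show ?thesis
      proof (cases "k = j")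
        case True
        then have "refl (\<alpha> k) \<mu>' = \<mu>" using 3 j by (simp add: refl_pp)
        then show ?thesis using step.hyps(1) by simp
      next
        case False
        have C: "coroot_pair (\<alpha> j) (\<alpha> k) \<le> 0" using cartan_nonpos j(1) k False by metis
        have "pp k \<mu> = pp k \<mu>' + coroot_pair (\<alpha> j) (\<alpha> k)" using j(3) pp_add[where \<mu>=\<mu>' and k=j and j=k] by simp
        then have pk: "pp k \<mu> = -1" and C0: "coroot_pair (\<alpha> j) (\<alpha> k) = 0"
          using pp_range[OF mL k] 3 C by auto
        have e1: "refl (\<alpha> k) \<mu> = \<mu> + \<alpha> k" using pk by (simp add: refl_pp)
        have a: "dn\<^sup>*\<^sup>* w (\<mu> + \<alpha> k)" using step.IH k e1 by metis
        have "coroot_pair (\<alpha> k) (\<alpha> j) = 0" using cartan_zero_sym[OF j(1) k C0] .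
        then have "pp j (\<mu> + \<alpha> k) = 1" using j(2) pp_add[where \<mu>=\<mu> and k=k and j=j] by simp
        moreover have "\<mu> + \<alpha> k \<in> Lam" using Lam_refl[OF mL k] e1 by simp
        ultimately have "dn (\<mu> + \<alpha> k) (\<mu> + \<alpha> k - \<alpha> j)" using j(1) by (auto simp: dn_def)
        moreover have "\<mu> + \<alpha> k - \<alpha> j = refl (\<alpha> k) \<mu>'"
        proof -
          have h: "refl (\<alpha> k) \<mu>' = \<mu>' + \<alpha> k" using 3 by (simp add: refl_pp)
          show ?thesis by (subst h, subst j(3), simp add: algebra_simps)
        qed
        ultimately show ?thesis using a by (metis rtranclp.rtrancl_into_rtrancl)
      qed
    qed
  qed
qed

lemma Lam_reach: "\<mu> \<in> Lam \<Longrightarrow> dn\<^sup>*\<^sup>* w \<mu>"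
proof -
  have "ok l \<Longrightarrow> dn\<^sup>*\<^sup>* w (wd \<alpha> l w)" for l
    by (induction l) (auto dest: reach_refl)
  then show "\<mu> \<in> Lam \<Longrightarrow> dn\<^sup>*\<^sup>* w \<mu>" unfolding Lam_def by blast
qed


lemma step_WP:
  assumes s: "\<sigma> \<in> WP" and k: "k \<in> {1..n}" and p: "pp k (\<sigma> w) = 1"
  shows "refl (\<alpha> k) \<circ> \<sigma> \<in> WP" and "wlen R \<alpha> n (refl (\<alpha> k) \<circ> \<sigma>) = Suc (wlen R \<alpha> n \<sigma>)"
proof -
  have sW: "\<sigma> \<in> weyl R" using s by (simp add: min_reps_def)
  obtain l where l: "ok l" "\<sigma> = wd \<alpha> l" using W_word sW by blast
  have orth: "\<And>x y. \<sigma> x \<bullet> \<sigma> y = x \<bullet> y" using wd_inner l by simp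
  show "refl (\<alpha> k) \<circ> \<sigma> \<in> WP"
    unfolding min_reps_def
  proof (intro CollectI conjI ballI)
    show "refl (\<alpha> k) \<circ> \<sigma> \<in> weyl R" using refl_group.step[OF alpha_R[OF k] sW] .
    fix i assume i: "i \<in> {1..n} - {r}"
    have sp: "\<sigma> (\<alpha> i) \<in> Rp" using s i by (simp add: min_reps_def)
    have "\<sigma> (\<alpha> i) \<noteq> \<alpha> k"
    proof
      assume e: "\<sigma> (\<alpha> i) = \<alpha> k"
      have "pp k (\<sigma> w) = coroot_pair w (\<alpha> i)" using cp_orth[of \<sigma>, OF orth] e by metis
      also have "\<dots> = 0" using fundr i by auto
      finally show False using p by simp
    qed
    then show "(refl (\<alpha> k) \<circ> \<sigma>) (\<alpha> i) \<in> Rp" using simple_refl_pos[OF k sp] by simp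
  qed
  let ?d = "wd \<alpha> (rev l) (\<alpha> k)"
  have dR: "?d \<in> R" using wd_R alpha_R[OF k] l(1) by simp
  have sd: "\<sigma> ?d = \<alpha> k" using wd_rev_right[OF l(1)] l(2) by simp
  have "coroot_pair w ?d = pp k (\<sigma> w)" using cp_orth[of \<sigma>, OF orth] sd by metis
  then have "?d \<in> Rp" using cp_w_pos[OF dR] p by simp
  then show "wlen R \<alpha> n (refl (\<alpha> k) \<circ> \<sigma>) = Suc (wlen R \<alpha> n \<sigma>)"
    using len_step[OF l(1) k] sd l(2) by blast
qed

lemma lift:
  assumes "dn\<^sup>*\<^sup>* \<mu> \<nu>" and s: "\<sigma> \<in> WP" and sm: "\<sigma> w = \<mu>"
  shows "\<exists>\<sigma>'\<in>WP. \<sigma>' w = \<nu> \<and> bruhat_le R \<alpha> n \<sigma> \<sigma>' \<and>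
           real (wlen R \<alpha> n \<sigma>') - H \<nu> = real (wlen R \<alpha> n \<sigma>) - H \<mu>"
  using assms(1)
proof (induction rule: rtranclp_induct)
  case base
  then show ?case using s sm by (auto simp: bruhat_le_def)
next
  case (step \<nu> \<nu>')
  obtain \<sigma>' where s': "\<sigma>' \<in> WP" "\<sigma>' w = \<nu>" "bruhat_le R \<alpha> n \<sigma> \<sigma>'"
    "real (wlen R \<alpha> n \<sigma>') - H \<nu> = real (wlen R \<alpha> n \<sigma>) - H \<mu>" using step.IH by blast
  obtain k where k: "k \<in> {1..n}" "pp k \<nu> = 1" "\<nu>' = \<nu> - \<alpha> k" using step.hyps(2) by (auto simp: dn_def)
  let ?s = "refl (\<alpha> k) \<circ> \<sigma>'"
  have p: "pp k (\<sigma>' w) = 1" using k s' by simp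
  have A: "?s \<in> WP" and B: "wlen R \<alpha> n ?s = Suc (wlen R \<alpha> n \<sigma>')" using step_WP[OF s'(1) k(1) p] by auto
  have C: "?s w = \<nu>'" using k s'(2) by (simp add: refl_pp)
  have "(\<sigma>', ?s) \<in> {(u, refl b \<circ> u) | u b. u \<in> weyl R \<and> b \<in> Rp \<and>
                 wlen R \<alpha> n u < wlen R \<alpha> n (refl b \<circ> u)}"
    using s'(1) alpha_pos[OF k(1)] B by (auto simp: min_reps_def)
  then have D: "bruhat_le R \<alpha> n \<sigma> ?s" using s'(3) unfolding bruhat_le_def
    by (meson rtrancl.rtrancl_into_rtrancl)
  have E: "real (wlen R \<alpha> n ?s) - H \<nu>' = real (wlen R \<alpha> n \<sigma>) - H \<mu>"
    using B s'(4) H_diff[OF k(1)] k(3) by simp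
  show ?case using A C D E by blast
qed

lemma id_WP: "id \<in> WP"
  using alpha_pos by (auto simp: min_reps_def refl_group.id)

lemma reach_len: "dn\<^sup>*\<^sup>* w \<nu> \<Longrightarrow> \<exists>m. H \<nu> = real m \<and> m \<le> card Rp"
proof -
  assume "dn\<^sup>*\<^sup>* w \<nu>"
  then obtain \<sigma> where "\<sigma> \<in> WP" "real (wlen R \<alpha> n \<sigma>) - H \<nu> = real (wlen R \<alpha> n id) - H w"
    using lift id_WP by fastforce
  then have "H \<nu> = real (wlen R \<alpha> n \<sigma>)" using wlen_id H_w by simp
  then show ?thesis using wlen_le by blast
qed

lemma bottom_exists: "\<exists>z. dn\<^sup>*\<^sup>* w z \<and> \<not> (\<exists>\<nu>. dn z \<nu>)"
proof -
  define S where "S = {m. \<exists>\<nu>. dn\<^sup>*\<^sup>* w \<nu> \<and> H \<nu> = real m}"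
  have fin: "finite S"
    by (rule finite_subset[of _ "{..card Rp}"]) (auto simp: S_def dest!: reach_len)
  have "0 \<in> S" using H_w by (auto simp: S_def)
  then have M: "Max S \<in> S" using fin Max_in by blast
  then obtain z where z: "dn\<^sup>*\<^sup>* w z" "H z = real (Max S)" by (auto simp: S_def)
  have "\<not> (\<exists>\<nu>. dn z \<nu>)"
  proof
    assume "\<exists>\<nu>. dn z \<nu>"
    then obtain \<nu> where nu: "dn z \<nu>" by blast
    then obtain k where k: "k \<in> {1..n}" "\<nu> = z - \<alpha> k" by (auto simp: dn_def)
    have "dn\<^sup>*\<^sup>* w \<nu>" using z(1) nu by (meson rtranclp.rtrancl_into_rtrancl)
    moreover have "H \<nu> = real (Suc (Max S))" using H_diff[OF k(1)] k(2) z(2) by simp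
    ultimately have "Suc (Max S) \<in> S" by (auto simp: S_def)
    then show False using Max_ge[OF fin] by fastforce
  qed
  then show ?thesis using z by blast
qed

lemma bot_refl:
  assumes zL: "z \<in> Lam" and nz: "\<not> (\<exists>\<nu>. dn z \<nu>)"
  shows "dn\<^sup>*\<^sup>* \<mu> z \<Longrightarrow> \<forall>k\<in>{1..n}. dn\<^sup>*\<^sup>* (refl (\<alpha> k) \<mu>) z"
proof (induction rule: converse_rtranclp_induct)
  case base
  show ?case
  proof
    fix k assume k: "k \<in> {1..n}"
    have "pp k z \<noteq> 1"
    proof
      assume "pp k z = 1"
      then have "dn z (z - \<alpha> k)" using zL k by (auto simp: dn_def)
      then show False using nz by blast
    qed
    then consider "pp k z = 0" | "pp k z = -1" using pp_range[OF zL k] by blast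
    then show "dn\<^sup>*\<^sup>* (refl (\<alpha> k) z) z"
    proof cases
      case 1 then show ?thesis by (simp add: refl_pp)
    next
      case 2
      then have e: "refl (\<alpha> k) z = z + \<alpha> k" by (simp add: refl_pp)
      have "pp k (z + \<alpha> k) = 1" using 2 pp_add[where \<mu>=z and k=k and j=k] cp_aa[OF k] by simp
      moreover have "z + \<alpha> k \<in> Lam" using Lam_refl[OF zL k] e by simp
      ultimately have "dn (z + \<alpha> k) z" using k by (auto simp: dn_def)
      then show ?thesis using e by auto
    qed
  qed
next
  case (step \<mu> \<mu>')
  from step.hyps(1) obtain j where j: "j \<in> {1..n}" "pp j \<mu> = 1" "\<mu>' = \<mu> - \<alpha> j" and mL: "\<mu> \<in> Lam"
    unfolding dn_def by blast
  have m'L: "\<mu>' \<in> Lam" using dn_Lam step.hyps(1) by blast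
  have r': "dn\<^sup>*\<^sup>* \<mu> z" using step.hyps by (meson converse_rtranclp_into_rtranclp)
  show ?case
  proof
    fix k assume k: "k \<in> {1..n}"
    consider "pp k \<mu> = 0" | "pp k \<mu> = -1" | "pp k \<mu> = 1" using pp_range[OF mL k] by blast
    then show "dn\<^sup>*\<^sup>* (refl (\<alpha> k) \<mu>) z"
    proof cases
      case 1 then show ?thesis using r' by (simp add: refl_pp)
    next
      case 2
      then have e: "refl (\<alpha> k) \<mu> = \<mu> + \<alpha> k" by (simp add: refl_pp)
      have "pp k (\<mu> + \<alpha> k) = 1" using 2 pp_add[where \<mu>=\<mu> and k=k and j=k] cp_aa[OF k] by simp
      moreover have "\<mu> + \<alpha> k \<in> Lam" using Lam_refl[OF mL k] e by simp
      ultimately have "dn (\<mu> + \<alpha> k) \<mu>" using k by (auto simp: dn_def)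
      then show ?thesis using e r' by (metis converse_rtranclp_into_rtranclp)
    next
      case 3
      show ?thesis
      proof (cases "k = j")
        case True
        then have "refl (\<alpha> k) \<mu> = \<mu>'" using 3 j by (simp add: refl_pp)
        then show ?thesis using step.hyps(2) by simp
      next
        case False
        have C: "coroot_pair (\<alpha> j) (\<alpha> k) \<le> 0" using cartan_nonpos j(1) k False by metis
        have "pp k \<mu>' = pp k \<mu> - coroot_pair (\<alpha> j) (\<alpha> k)" using j(3) pp_diff[where \<mu>=\<mu> and k=j and j=k] by simp
        then have pk: "pp k \<mu>' = 1" and C0: "coroot_pair (\<alpha> j) (\<alpha> k) = 0"
          using pp_range[OF m'L k] 3 C by auto
        have e1: "refl (\<alpha> k) \<mu>' = \<mu>' - \<alpha> k" using pk by (simp add: refl_pp)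
        have a: "dn\<^sup>*\<^sup>* (\<mu>' - \<alpha> k) z" using step.IH k e1 by metis
        have "coroot_pair (\<alpha> k) (\<alpha> j) = 0" using cartan_zero_sym[OF j(1) k C0] .
        then have "pp j (\<mu> - \<alpha> k) = 1" using j(2) pp_diff[where \<mu>=\<mu> and k=k and j=j] by simp
        moreover have "\<mu> - \<alpha> k \<in> Lam" using Lam_refl[OF mL k] 3 by (simp add: refl_pp)
        ultimately have "dn (\<mu> - \<alpha> k) (\<mu> - \<alpha> k - \<alpha> j)" using j(1) by (auto simp: dn_def)
        moreover have "\<mu> - \<alpha> k - \<alpha> j = \<mu>' - \<alpha> k" by (subst j(3), simp add: algebra_simps)
        moreover have "refl (\<alpha> k) \<mu> = \<mu> - \<alpha> k" using 3 by (simp add: refl_pp)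
        ultimately show ?thesis using a by (metis converse_rtranclp_into_rtranclp)
      qed
    qed
  qed
qed

lemma Lam_bot:
  assumes z: "dn\<^sup>*\<^sup>* w z" and nz: "\<not> (\<exists>\<nu>. dn z \<nu>)" and m: "\<mu> \<in> Lam"
  shows "dn\<^sup>*\<^sup>* \<mu> z"
proof -
  have zL: "z \<in> Lam" using dns_Lam[OF z Lam_w] .
  have "ok l \<Longrightarrow> dn\<^sup>*\<^sup>* (wd \<alpha> l w) z" for l
    by (induction l) (use z bot_refl[OF zL nz] in auto)
  then show ?thesis using m unfolding Lam_def by blast
qed


definition up :: "real \<Rightarrow> nat \<Rightarrow> 'a \<Rightarrow> 'a \<Rightarrow> bool" where
  "up c s \<mu> \<nu> \<longleftrightarrow> \<mu> \<in> Lam \<and> (\<exists>k\<in>{1..n}. pp k \<mu> = -1 \<and> \<nu> = \<mu> + \<alpha> k \<and> (k \<noteq> s \<or> c + 1 \<le> cnt s \<mu>))"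

lemma up_Lam: "up c s \<mu> \<nu> \<Longrightarrow> \<nu> \<in> Lam"
proof -
  assume "up c s \<mu> \<nu>"
  then obtain k where "\<mu> \<in> Lam" "k \<in> {1..n}" "pp k \<mu> = -1" "\<nu> = \<mu> + \<alpha> k" by (auto simp: up_def)
  then show ?thesis using Lam_refl[of \<mu> k] by (simp add: refl_pp)
qed

lemma ups_Lam: "(up c s)\<^sup>*\<^sup>* \<mu> \<nu> \<Longrightarrow> \<mu> \<in> Lam \<Longrightarrow> \<nu> \<in> Lam"
  by (induction rule: rtranclp_induct) (auto intro: up_Lam)

definition hN :: "'a \<Rightarrow> nat" where "hN \<mu> = nat \<lfloor>H \<mu>\<rfloor>"

lemma Lam_H: "\<mu> \<in> Lam \<Longrightarrow> \<exists>m. H \<mu> = real m"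
  using Lam_reach reach_len by blast

lemma up_dec: "up c s \<mu> \<nu> \<Longrightarrow> hN \<nu> < hN \<mu>"
proof -
  assume u: "up c s \<mu> \<nu>"
  then obtain k where k: "\<mu> \<in> Lam" "k \<in> {1..n}" "\<nu> = \<mu> + \<alpha> k" by (auto simp: up_def)
  obtain m where m: "H \<mu> = real m" using Lam_H k(1) by blast
  obtain m' where m': "H \<nu> = real m'" using Lam_H up_Lam[OF u] by blast
  have "H \<nu> = H \<mu> - 1" using H_add[OF k(2)] k(3) by simp
  then have "m = Suc m'" using m m' by simp
  then show ?thesis using m m' by (simp add: hN_def)
qed

lemma up_half:
  assumes mL: "\<mu> \<in> Lam" and i: "i \<in> {1..n}" and j: "j \<in> {1..n}" and ij: "i \<noteq> j"
    and pi: "pp i \<mu> = -1" and pj: "pp j \<mu> = -1" and cj: "j \<noteq> s \<or> c + 1 \<le> cnt s \<mu>" and s: "s \<in> {1..n}"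
  shows "up c s (\<mu> + \<alpha> i) (\<mu> + \<alpha> i + \<alpha> j)"
proof -
  have e: "refl (\<alpha> i) \<mu> = \<mu> + \<alpha> i" using pi by (simp add: refl_pp)
  have L: "\<mu> + \<alpha> i \<in> Lam" using Lam_refl[OF mL i] e by simp
  have C: "coroot_pair (\<alpha> i) (\<alpha> j) \<le> 0" using cartan_nonpos i j ij by metis
  have "pp j (\<mu> + \<alpha> i) = pp j \<mu> + coroot_pair (\<alpha> i) (\<alpha> j)" using pp_add[where \<mu>=\<mu> and k=i and j=j] by simp
  then have P: "pp j (\<mu> + \<alpha> i) = -1" using pp_range[OF L j] pj C by auto
  have "j \<noteq> s \<or> c + 1 \<le> cnt s (\<mu> + \<alpha> i)"
    using cj cnt_add[OF s i, of \<mu>] ij by auto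
  then show ?thesis using L P j by (auto simp: up_def)
qed

lemma up_dia: "s \<in> {1..n} \<Longrightarrow> up c s \<mu> \<nu>1 \<Longrightarrow> up c s \<mu> \<nu>2 \<Longrightarrow> \<nu>1 \<noteq> \<nu>2 \<Longrightarrow> \<exists>\<zeta>. up c s \<nu>1 \<zeta> \<and> up c s \<nu>2 \<zeta>"
proof -
  assume s: "s \<in> {1..n}" and u1: "up c s \<mu> \<nu>1" and u2: "up c s \<mu> \<nu>2" and ne: "\<nu>1 \<noteq> \<nu>2"
  obtain i where i: "\<mu> \<in> Lam" "i \<in> {1..n}" "pp i \<mu> = -1" "\<nu>1 = \<mu> + \<alpha> i" "i \<noteq> s \<or> c + 1 \<le> cnt s \<mu>"
    using u1 by (auto simp: up_def)
  obtain j where j: "j \<in> {1..n}" "pp j \<mu> = -1" "\<nu>2 = \<mu> + \<alpha> j" "j \<noteq> s \<or> c + 1 \<le> cnt s \<mu>"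
    using u2 by (auto simp: up_def)
  have ij: "i \<noteq> j" using ne i j by auto
  have "up c s \<nu>1 (\<mu> + \<alpha> i + \<alpha> j)" using up_half[OF i(1) i(2) j(1) ij i(3) j(2) j(4) s] i(4) by simp
  moreover have "up c s \<nu>2 (\<mu> + \<alpha> j + \<alpha> i)" using up_half[OF i(1) j(1) i(2) ij[symmetric] j(2) i(3) i(5) s] j(3) by simp
  moreover have "\<mu> + \<alpha> j + \<alpha> i = \<mu> + \<alpha> i + \<alpha> j" by (simp add: algebra_simps)
  ultimately show ?thesis by metis
qed

lemma nontop: "\<mu> \<in> Lam \<Longrightarrow> \<mu> \<noteq> w \<Longrightarrow> \<exists>k\<in>{1..n}. pp k \<mu> = -1"
proof -
  assume m: "\<mu> \<in> Lam" "\<mu> \<noteq> w"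
  have "dn\<^sup>*\<^sup>* w \<mu>" using Lam_reach m(1) by blast
  then obtain \<mu>0 where "dn \<mu>0 \<mu>" using m(2) by (metis rtranclp.cases)
  then obtain k where k: "k \<in> {1..n}" "pp k \<mu>0 = 1" "\<mu> = \<mu>0 - \<alpha> k" by (auto simp: dn_def)
  then have "pp k \<mu> = -1" using pp_diff[where \<mu>=\<mu>0 and k=k and j=k] cp_aa[OF k(1)] by simp
  then show ?thesis using k(1) by blast
qed

lemma cnt_int: "\<mu> \<in> Lam \<Longrightarrow> j \<in> {1..n} \<Longrightarrow> cnt j \<mu> \<in> \<int>"
proof -
  assume m: "\<mu> \<in> Lam" and j: "j \<in> {1..n}"
  have "dn\<^sup>*\<^sup>* w \<mu>" using Lam_reach m by blast
  then show ?thesis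
  proof (induction rule: rtranclp_induct)
    case base then show ?case by (simp add: cnt_w)
  next
    case (step y z)
    then obtain k where "k \<in> {1..n}" "z = y - \<alpha> k" by (auto simp: dn_def)
    then show ?case using step.IH cnt_diff[OF j, of k y] by auto
  qed
qed

lemma cnt_mono: "dn\<^sup>*\<^sup>* \<mu> \<nu> \<Longrightarrow> s \<in> {1..n} \<Longrightarrow> cnt s \<mu> \<le> cnt s \<nu>"
proof (induction rule: rtranclp_induct)
  case base then show ?case by simp
next
  case (step y z)
  then obtain k where "k \<in> {1..n}" "z = y - \<alpha> k" by (auto simp: dn_def)
  then show ?case using step cnt_diff[of s k y] by auto
qed

lemma up_pres: "(up c s)\<^sup>*\<^sup>* \<mu> \<nu> \<Longrightarrow> s \<in> {1..n} \<Longrightarrow> c \<le> cnt s \<mu> \<Longrightarrow> c \<le> cnt s \<nu>"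
proof (induction rule: rtranclp_induct)
  case base then show ?case by simp
next
  case (step y z)
  then obtain k where k: "k \<in> {1..n}" "z = y + \<alpha> k" "k \<noteq> s \<or> c + 1 \<le> cnt s y" by (auto simp: up_def)
  then show ?case using step cnt_add[of s k y] by auto
qed

lemma conv: "dn\<^sup>*\<^sup>* \<mu> \<nu> \<Longrightarrow> s \<in> {1..n} \<Longrightarrow> c \<le> cnt s \<mu> \<Longrightarrow> (up c s)\<^sup>*\<^sup>* \<nu> \<mu>"
proof (induction rule: rtranclp_induct)
  case base then show ?case by simp
next
  case (step y z)
  then obtain k where k: "y \<in> Lam" "k \<in> {1..n}" "pp k y = 1" "z = y - \<alpha> k" by (auto simp: dn_def)
  have zL: "z \<in> Lam" using dn_Lam step.hyps(2) by blast
  have "pp k z = -1" using k pp_diff[where \<mu>=y and k=k and j=k] cp_aa[OF k(2)] by simp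
  moreover have "y = z + \<alpha> k" using k(4) by simp
  moreover have "k \<noteq> s \<or> c + 1 \<le> cnt s z"
    using cnt_mono[OF step.hyps(1) step.prems(1)] step.prems(2) cnt_diff[OF step.prems(1) k(2), of y] k(4) by auto
  ultimately have "up c s z y" using zL k(2) by (auto simp: up_def)
  then show ?case using step by (meson converse_rtranclp_into_rtranclp)
qed

lemma rev_up: "(up c s)\<^sup>*\<^sup>* x y \<Longrightarrow> dn\<^sup>*\<^sup>* y x"
proof (induction rule: rtranclp_induct)
  case base then show ?case by simp
next
  case (step y z)
  then obtain k where k: "y \<in> Lam" "k \<in> {1..n}" "pp k y = -1" "z = y + \<alpha> k" by (auto simp: up_def)
  have zL: "z \<in> Lam" using up_Lam step.hyps(2) by blast
  have "pp k z = 1" using k pp_add[where \<mu>=y and k=k and j=k] cp_aa[OF k(2)] by simp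
  then have "dn z y" using zL k by (auto simp: dn_def)
  then show ?case using step by (meson converse_rtranclp_into_rtranclp)
qed

theorem main_loc:
  fixes c :: int
  assumes s: "s \<in> {1..n}" and c0: "0 \<le> c" and w0P: "w0P \<in> WP" and ca: "real_of_int c \<le> cnt s (w0P w)"
  shows "\<exists>!\<tau>. \<tau> \<in> WP \<and> (w - \<tau> w) \<bullet> lam s = of_int c \<and>
           (\<forall>\<tau>'. \<tau>' \<in> WP \<and> (w - \<tau>' w) \<bullet> lam s = of_int c \<longrightarrow> \<not> bruhat_less R \<alpha> n \<tau>' \<tau>)"
proof -
  obtain z where z: "dn\<^sup>*\<^sup>* w z" "\<not> (\<exists>\<nu>. dn z \<nu>)" using bottom_exists by blast
  have zL: "z \<in> Lam" using dns_Lam[OF z(1) Lam_w] .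
  have cz: "real_of_int c \<le> cnt s z"
  proof -
    have "w0P \<in> weyl R" using w0P by (simp add: min_reps_def)
    then have "cnt s (w0P w) \<le> cnt s z" using cnt_mono[OF Lam_bot[OF z W_Lam] s] by blast
    then show ?thesis using ca by linarith
  qed
  let ?r = "up (real_of_int c) s"
  have dec: "\<And>x y. ?r x y \<Longrightarrow> hN y < hN x" using up_dec by blast
  have dia: "\<And>x y1 y2. ?r x y1 \<Longrightarrow> ?r x y2 \<Longrightarrow> y1 \<noteq> y2 \<Longrightarrow> \<exists>z. ?r y1 z \<and> ?r y2 z"
    using up_dia[OF s] by blast
  obtain g where g: "?r\<^sup>*\<^sup>* z g" "\<not> (\<exists>y. ?r g y)" using nf_exists[of ?r hN z] dec by blast
  have gL: "g \<in> Lam" using ups_Lam[OF g(1) zL] .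
  have cg: "real_of_int c \<le> cnt s g" using up_pres[OF g(1) s cz] .
  have cge: "cnt s g = real_of_int c"
  proof (rule ccontr)
    assume "cnt s g \<noteq> real_of_int c"
    then have lt: "real_of_int c < cnt s g" using cg by simp
    obtain m :: int where m: "cnt s g = of_int m" using cnt_int[OF gL s] by (auto elim: Ints_cases)
    have c1: "real_of_int c + 1 \<le> cnt s g" using lt m by simp
    have "g \<noteq> w" using lt c0 cnt_w by auto
    then obtain k where k: "k \<in> {1..n}" "pp k g = -1" using nontop gL by blast
    then have "?r g (g + \<alpha> k)" using gL c1 by (auto simp: up_def)
    then show False using g(2) by blast
  qed
  have U: "\<And>x n1 n2. ?r\<^sup>*\<^sup>* x n1 \<Longrightarrow> ?r\<^sup>*\<^sup>* x n2 \<Longrightarrow> \<not> (\<exists>y. ?r n1 y) \<Longrightarrow> \<not> (\<exists>y. ?r n2 y) \<Longrightarrow> n1 = n2"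
  proof -
    fix x n1 n2 assume a: "?r\<^sup>*\<^sup>* x n1" "?r\<^sup>*\<^sup>* x n2" "\<not> (\<exists>y. ?r n1 y)" "\<not> (\<exists>y. ?r n2 y)"
    show "n1 = n2"
      by (rule nf_unique[where r="?r" and h=hN]) (use dec dia a in blast)+
  qed
  have least: "dn\<^sup>*\<^sup>* g x" if xL: "x \<in> Lam" and cx: "cnt s x = real_of_int c" for x
  proof -
    have "?r\<^sup>*\<^sup>* z x" using conv[OF Lam_bot[OF z xL] s] cx by simp
    moreover obtain m where m: "?r\<^sup>*\<^sup>* x m" "\<not> (\<exists>y. ?r m y)" using nf_exists[of ?r hN x] dec by blast
    ultimately have "?r\<^sup>*\<^sup>* z m" by (meson rtranclp_trans)
    then show ?thesis using U[OF _ g(1) m(2) g(2)] rev_up m(1) by blast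
  qed
  obtain \<tau>c where tc: "\<tau>c \<in> WP" "\<tau>c w = g"
    using lift[OF Lam_reach[OF gL] id_WP] by auto
  have below: "bruhat_le R \<alpha> n \<tau>c \<tau>" if t: "\<tau> \<in> WP" and ct: "(w - \<tau> w) \<bullet> lam s = of_int c" for \<tau>
  proof -
    have tL: "\<tau> w \<in> Lam" using W_Lam t by (auto simp: min_reps_def)
    have "dn\<^sup>*\<^sup>* g (\<tau> w)" using least[OF tL] ct by (simp add: cnt_def)
    then obtain \<sigma> where "\<sigma> \<in> WP" "\<sigma> w = \<tau> w" "bruhat_le R \<alpha> n \<tau>c \<sigma>" using lift tc by blast
    then show ?thesis using WP_inj t by metis
  qed
  have P: "\<tau>c \<in> WP \<and> (w - \<tau>c w) \<bullet> lam s = of_int c \<and>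
           (\<forall>\<tau>'. \<tau>' \<in> WP \<and> (w - \<tau>' w) \<bullet> lam s = of_int c \<longrightarrow> \<not> bruhat_less R \<alpha> n \<tau>' \<tau>c)"
  proof (intro conjI allI impI)
    show "\<tau>c \<in> WP" by (rule tc(1))
    show "(w - \<tau>c w) \<bullet> lam s = of_int c" using cge tc(2) by (simp add: cnt_def)
    fix \<tau>' assume t': "\<tau>' \<in> WP \<and> (w - \<tau>' w) \<bullet> lam s = of_int c"
    show "\<not> bruhat_less R \<alpha> n \<tau>' \<tau>c"
    proof
      assume "bruhat_less R \<alpha> n \<tau>' \<tau>c"
      then have "wlen R \<alpha> n \<tau>' < wlen R \<alpha> n \<tau>c" using bruhat_len by (auto simp: bruhat_less_def)
      moreover have "\<tau>c = \<tau>' \<or> wlen R \<alpha> n \<tau>c < wlen R \<alpha> n \<tau>'" using bruhat_len below t' by blast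
      ultimately show False by auto
    qed
  qed
  show ?thesis
  proof (rule ex1I[of _ \<tau>c])
    show "\<tau>c \<in> WP \<and> (w - \<tau>c w) \<bullet> lam s = of_int c \<and>
           (\<forall>\<tau>'. \<tau>' \<in> WP \<and> (w - \<tau>' w) \<bullet> lam s = of_int c \<longrightarrow> \<not> bruhat_less R \<alpha> n \<tau>' \<tau>c)" by (rule P)
    fix \<tau> assume t: "\<tau> \<in> WP \<and> (w - \<tau> w) \<bullet> lam s = of_int c \<and>
           (\<forall>\<tau>'. \<tau>' \<in> WP \<and> (w - \<tau>' w) \<bullet> lam s = of_int c \<longrightarrow> \<not> bruhat_less R \<alpha> n \<tau>' \<tau>)"
    have "bruhat_le R \<alpha> n \<tau>c \<tau>" using below t by blast
    then show "\<tau> = \<tau>c" using t P by (auto simp: bruhat_less_def)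
  qed
qed

end
theorem lemma4p1:
  fixes R :: "'a::euclidean_space set"
    and \<alpha> \<omega> lam :: "nat \<Rightarrow> 'a"
    and n r s :: nat
    and w0 w0P :: "'a \<Rightarrow> 'a"
    and a :: "nat \<Rightarrow> int"
    and c :: int
  assumes rs: "root_system R" and irr: "irreducible_rs R"
    and rank: "n = DIM('a)"
    and base: "is_base R \<alpha> n"
    and fund: "\<forall>i\<in>{1..n}. \<forall>j\<in>{1..n}. coroot_pair (\<omega> i) (\<alpha> j) = (if i = j then 1 else 0)"
    and lam: "\<forall>t\<in>{1..n}. \<forall>j\<in>{1..n}. \<alpha> j \<bullet> lam t = (if j = t then 1 else 0)"
    and r: "r \<in> {1..n}"
    and minuscule: "\<forall>\<beta>\<in>pos_roots R \<alpha> n. coroot_pair (\<omega> r) \<beta> \<le> 1"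
    and w0: "w0 \<in> weyl R" "\<forall>w\<in>weyl R. wlen R \<alpha> n w \<le> wlen R \<alpha> n w0"
    and w0P: "w0P \<in> min_reps R \<alpha> n r" "\<exists>u\<in>weyl_par \<alpha> n r. w0P = w0 \<circ> u"
    and a: "w0P (\<omega> r) = \<omega> r - (\<Sum>j=1..n. of_int (a j) *\<^sub>R \<alpha> j)"
    and s: "s \<in> {1..n}"
    and c: "0 \<le> c" "c \<le> a s"
  shows "\<exists>!\<tau>. \<tau> \<in> min_reps R \<alpha> n r \<and> (\<omega> r - \<tau> (\<omega> r)) \<bullet> lam s = of_int c \<and>
           (\<forall>\<tau>'. \<tau>' \<in> min_reps R \<alpha> n r \<and> (\<omega> r - \<tau>' (\<omega> r)) \<bullet> lam s = of_int c
                  \<longrightarrow> \<not> bruhat_less R \<alpha> n \<tau>' \<tau>)"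

proof -
  have fr: "\<forall>j\<in>{1..n}. coroot_pair (\<omega> r) (\<alpha> j) = (if r = j then 1 else 0)"
    using fund r by blast
  interpret RS R \<alpha> n lam "\<omega> r" r
    by unfold_locales (use rs base lam r fr minuscule in auto)
  have "cnt s (w0P (\<omega> r)) = (\<Sum>j=1..n. of_int (a j) *\<^sub>R \<alpha> j) \<bullet> lam s"
    using a by (simp add: cnt_def)
  also have "\<dots> = of_int (a s)" using sum_lam[OF s, of "\<lambda>j. of_int (a j)"] by simp
  finally have ca: "real_of_int c \<le> cnt s (w0P (\<omega> r))" using c(2) by simp
  show ?thesis using main_loc[OF s c(1) w0P(1) ca] .
qed

end
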